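(* Let $H \geq 1$ be a real number, let $m = p/q$ be a rational number with $p, q$ integers and $q > 0$, and let $c_1, c_2, c_3$ be integers with $c_1 \neq 0$, $c_3 \geq 0$ and $(c_1, c_2) = 1$. Suppose that there are at least three integer points $(x,y) \in \mathbb{Z}^2$ with $|x| \leq H$, $|y| \leq H$ lying on the circle \[ (c_1 X - c_2)^2 + (c_1 Y - m c_2)^2 = c_3 . \] Then \[ |c_1| \leq 4q(1+|m|)H, \qquad |c_2| \leq 2qH^2, \qquad c_3 \leq 36 q^2 (1+|m|)^2 H^4 . \]
   Context: For integers $a, b$, the notation $(a,b) = 1$ means: either one of $a, b$ equals $1$ and the other equals $0$, or $a$ and $b$ are both nonzero and coprime. *)

theory Defs
  imports Complex_Main
begin

text \<open>The paper's convention: (a,b) = 1 means either one of a, b is 1 and the other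
is 0, or a and b are both nonzero and coprime.\<close>
definition coprime_pair :: "int \<Rightarrow> int \<Rightarrow> bool" where
  "coprime_pair a b \<longleftrightarrow>
     ((a = 1 \<and> b = 0) \<or> (a = 0 \<and> b = 1) \<or> (a \<noteq> 0 \<and> b \<noteq> 0 \<and> coprime a b))"

end

theory Submission
  imports Defs
begin

lemma two_ab: "2*\<bar>a*b\<bar> \<le> a^2 + (b::real)^2"
proof -
  have "0 \<le> (\<bar>a\<bar> - \<bar>b\<bar>)^2" by simp
  thus ?thesis by (simp add: power2_eq_square algebra_simps abs_mult)
qed

lemma L1:
  fixes a1 a2 b1 b2 H :: real
  assumes "\<bar>a1\<bar> \<le> H" "\<bar>a2\<bar> \<le> H" "\<bar>b1\<bar> \<le> H" "\<bar>b2\<bar> \<le> H"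
  shows "((a1-a2)^2+(b1-b2)^2)*((b1+b2)^2+(a1-a2)^2) \<le> 33*H^4"
proof -
  have H0: "0 \<le> H" using assms by linarith
  have "\<bar>a1-a2\<bar> \<le> \<bar>2*H\<bar>" using assms by linarith
  hence "(a1-a2)^2 \<le> (2*H)^2" using abs_le_square_iff by blast
  hence h1: "(a1-a2)^2 \<le> 4*H^2" by (simp add: power2_eq_square)
  have sq: "b^2 \<le> H^2" if "\<bar>b\<bar> \<le> H" for b proof -
    have "\<bar>b\<bar> \<le> \<bar>H\<bar>" using that H0 by simp
    thus ?thesis using abs_le_square_iff by blast
  qed
  have h2: "(b1-b2)^2 + (b1+b2)^2 \<le> 4*H^2"
  proof -
    have "(b1-b2)^2 + (b1+b2)^2 = 2*(b1^2+b2^2)" by (simp add: power2_eq_square algebra_simps)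
    thus ?thesis using sq[OF assms(3)] sq[OF assms(4)] by (smt (verit))
  qed
  have h3: "(b1-b2)^2*(b1+b2)^2 \<le> H^4"
  proof -
    have e: "(b1-b2)^2*(b1+b2)^2 = (b1^2-b2^2)^2" by (simp add: power2_eq_square algebra_simps)
    have "0 \<le> b1^2" "0 \<le> b2^2" by simp_all
    hence "\<bar>b1^2-b2^2\<bar> \<le> \<bar>H^2\<bar>" using sq[OF assms(3)] sq[OF assms(4)] by (smt (verit) zero_le_power2)
    hence "(b1^2-b2^2)^2 \<le> (H^2)^2" using abs_le_square_iff by blast
    thus ?thesis using e by (simp add: power_mult[symmetric])
  qed
  have e2: "((a1-a2)^2+(b1-b2)^2)*((b1+b2)^2+(a1-a2)^2) = ((a1-a2)^2)^2 + (a1-a2)^2*((b1-b2)^2 + (b1+b2)^2) + (b1-b2)^2*(b1+b2)^2"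
    by (simp add: algebra_simps power2_eq_square)
  have "((a1-a2)^2)^2 \<le> (4*H^2)^2" using h1 by (intro power_mono) auto
  moreover have "(a1-a2)^2*((b1-b2)^2 + (b1+b2)^2) \<le> (4*H^2)*(4*H^2)"
    using h1 h2 by (intro mult_mono) auto
  ultimately show ?thesis using e2 h3 by (simp add: power2_eq_square power4_eq_xxxx)
qed

lemma L2:
  fixes x1 y1 x2 y2 H m :: real
  assumes "\<bar>x1\<bar> \<le> H" "\<bar>x2\<bar> \<le> H" "\<bar>y1\<bar> \<le> H" "\<bar>y2\<bar> \<le> H"
  shows "((x1-x2)^2+(y1-y2)^2)*(((y1+y2) - m*(x1+x2))^2 + ((x1-x2) + m*(y1-y2))^2) \<le> 36*(1+\<bar>m\<bar>)^2*H^4"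
proof -
  define D where "D = (x1-x2)^2+(y1-y2)^2"
  define B where "B = (y1+y2)^2+(x1-x2)^2"
  define C where "C = (x1+x2)^2+(y1-y2)^2"
  have DB: "D*B \<le> 33*H^4" unfolding D_def B_def using L1[OF assms] .
  have DC: "D*C \<le> 33*H^4" unfolding D_def C_def using L1[OF assms(3,4,1,2)] by (simp add: add.commute)
  have D0: "0 \<le> D" unfolding D_def by simp
  have U: "((y1+y2) - m*(x1+x2))^2 + ((x1-x2) + m*(y1-y2))^2 = B + m*(2*((x1-x2)*(y1-y2) - (x1+x2)*(y1+y2))) + m^2*C"
    unfolding B_def C_def by (simp add: power2_eq_square algebra_simps)
  have "2*\<bar>(x1-x2)*(y1-y2) - (x1+x2)*(y1+y2)\<bar> \<le> B + C"
    using two_ab[of "x1-x2" "y1-y2"] two_ab[of "x1+x2" "y1+y2"] unfolding B_def C_def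
    by (smt (verit))
  hence X: "\<bar>2*((x1-x2)*(y1-y2) - (x1+x2)*(y1+y2))\<bar> \<le> B + C" by (simp only: abs_mult)
  have "m*(2*((x1-x2)*(y1-y2) - (x1+x2)*(y1+y2))) \<le> \<bar>m\<bar>*\<bar>2*((x1-x2)*(y1-y2) - (x1+x2)*(y1+y2))\<bar>"
    by (metis abs_ge_self abs_mult)
  also have "\<dots> \<le> \<bar>m\<bar>*(B+C)" using X by (intro mult_left_mono) auto
  finally have "m*(2*((x1-x2)*(y1-y2) - (x1+x2)*(y1+y2))) \<le> \<bar>m\<bar>*(B+C)" .
  hence "((y1+y2) - m*(x1+x2))^2 + ((x1-x2) + m*(y1-y2))^2 \<le> B + \<bar>m\<bar>*(B+C) + m^2*C"
    using U by linarith
  hence "D*(((y1+y2) - m*(x1+x2))^2 + ((x1-x2) + m*(y1-y2))^2) \<le> D*(B + \<bar>m\<bar>*(B+C) + m^2*C)"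
    using D0 by (rule mult_left_mono)
  also have "\<dots> = D*B + \<bar>m\<bar>*(D*B+D*C) + m^2*(D*C)" by (simp add: algebra_simps)
  also have "\<dots> \<le> 33*H^4 + \<bar>m\<bar>*(33*H^4+33*H^4) + m^2*(33*H^4)"
    using DB DC by (intro add_mono mult_left_mono) auto
  also have "\<dots> = 33*(1+\<bar>m\<bar>)^2*H^4" by (simp add: power2_eq_square algebra_simps)
  also have "\<dots> \<le> 36*(1+\<bar>m\<bar>)^2*H^4" by (intro mult_right_mono) auto
  finally show ?thesis unfolding D_def .
qed

lemma rel:
  fixes x1 y1 x2 y2 q p c1 c2 c3 :: int
  assumes q: "q>0" and c1: "c1\<noteq>0"
   and E1: "(q*c1*x1 - q*c2)^2 + (q*c1*y1 - p*c2)^2 = q^2*c3"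
   and E2: "(q*c1*x2 - q*c2)^2 + (q*c1*y2 - p*c2)^2 = q^2*c3"
  shows "q*c1*(x1^2+y1^2-x2^2-y2^2) = 2*c2*(q*(x1-x2) + p*(y1-y2))"
proof -
  have "q*c1*(q*c1*(x1^2+y1^2-x2^2-y2^2) - 2*c2*(q*(x1-x2) + p*(y1-y2))) = 0"
    using E1 E2 by algebra
  thus ?thesis using q c1 by simp
qed

lemma pair_bound:
  fixes x1 y1 x2 y2 q p c1 c2 c3 :: int
  assumes q: "q>0" and c1: "c1\<noteq>0" and cop: "coprime c1 c2"
   and E1: "(q*c1*x1 - q*c2)^2 + (q*c1*y1 - p*c2)^2 = q^2*c3"
   and E2: "(q*c1*x2 - q*c2)^2 + (q*c1*y2 - p*c2)^2 = q^2*c3"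
   and k: "q*(x1-x2) + p*(y1-y2) \<noteq> 0"
  shows "\<bar>c1\<bar> \<le> 2*\<bar>q*(x1-x2) + p*(y1-y2)\<bar>" "\<bar>c2\<bar> \<le> q*\<bar>x1^2+y1^2-x2^2-y2^2\<bar>"
   "c3 \<le> ((x1-x2)^2+(y1-y2)^2)*((q*(y1+y2)-p*(x1+x2))^2 + (q*(x1-x2)+p*(y1-y2))^2)"
proof -
  define K where "K = q*(x1-x2) + p*(y1-y2)"
  define N where "N = x1^2+y1^2-x2^2-y2^2"
  have R: "q*c1*N = 2*c2*K" using rel[OF q c1 E1 E2] unfolding K_def N_def .
  have "c2*(2*K) = c1*(q*N)" using R by (simp add: algebra_simps)
  hence "c1 dvd c2*(2*K)" by simp
  hence "c1 dvd 2*K" using cop by (simp add: coprime_dvd_mult_right_iff)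
  then obtain e where e: "2*K = c1*e" by blast
  have e0: "e \<noteq> 0" using e k unfolding K_def by auto
  have "c1*(q*N) = c1*(c2*e)" using R e by (simp add: algebra_simps)
  hence qN: "q*N = c2*e" using c1 by simp
  have "\<bar>c1\<bar>*1 \<le> \<bar>c1\<bar>*\<bar>e\<bar>" using e0 by (intro mult_left_mono) auto
  moreover have "\<bar>2*K\<bar> = \<bar>c1\<bar>*\<bar>e\<bar>" using e by (simp add: abs_mult)
  moreover have "\<bar>2*K\<bar> = 2*\<bar>K\<bar>" by (simp add: abs_mult)
  ultimately have "\<bar>c1\<bar> \<le> 2*\<bar>K\<bar>" by linarith
  thus "\<bar>c1\<bar> \<le> 2*\<bar>q*(x1-x2) + p*(y1-y2)\<bar>" unfolding K_def .
  have "\<bar>c2\<bar>*1 \<le> \<bar>c2\<bar>*\<bar>e\<bar>" using e0 by (intro mult_left_mono) auto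
  also have "\<dots> = \<bar>q*N\<bar>" using qN by (simp add: abs_mult)
  finally show "\<bar>c2\<bar> \<le> q*\<bar>x1^2+y1^2-x2^2-y2^2\<bar>" using q unfolding N_def by (simp add: abs_mult)
  have "q^2*(e^2*c3) = q^2*((2*K*x1 - q*N)^2 + (2*K*y1 - p*N)^2)"
    using E1 e qN by algebra
  hence F1: "e^2*c3 = (2*K*x1 - q*N)^2 + (2*K*y1 - p*N)^2" using q by simp
  have "q^2*(e^2*c3) = q^2*((2*K*x2 - q*N)^2 + (2*K*y2 - p*N)^2)"
    using E2 e qN by algebra
  hence F2: "e^2*c3 = (2*K*x2 - q*N)^2 + (2*K*y2 - p*N)^2" using q by simp
  have W: "e^2*c3 = ((x1-x2)^2+(y1-y2)^2)*((q*(y1+y2)-p*(x1+x2))^2 + (q*(x1-x2)+p*(y1-y2))^2)"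
    using F1 F2 unfolding K_def N_def by algebra
  have "0 \<le> q^2*c3" using E1[symmetric] by simp
  hence c30: "0 \<le> c3" using q by (simp add: zero_le_mult_iff)
  have ea: "1 \<le> \<bar>e\<bar>" using e0 by arith
  have "1*1 \<le> \<bar>e\<bar>*\<bar>e\<bar>" using ea by (intro mult_mono) auto
  hence "1 \<le> e^2" by (simp add: power2_eq_square)
  hence "c3*1 \<le> c3*e^2" using c30 by (intro mult_left_mono) auto
  thus "c3 \<le> ((x1-x2)^2+(y1-y2)^2)*((q*(y1+y2)-p*(x1+x2))^2 + (q*(x1-x2)+p*(y1-y2))^2)"
    using W by (simp add: mult.commute)
qed

lemma three_pts:
  fixes x1 y1 x2 y2 x3 y3 q p :: int
  assumes q: "q \<noteq> 0"
    and k2: "q*(x2-x1)+p*(y2-y1) = 0" and k3: "q*(x3-x1)+p*(y3-y1) = 0"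
    and n2: "x2^2+y2^2 = x1^2+y1^2" and n3: "x3^2+y3^2 = x1^2+y1^2"
    and d12: "(x2,y2) \<noteq> (x1,y1)" and d13: "(x3,y3) \<noteq> (x1,y1)" and d23: "(x3,y3) \<noteq> (x2,y2)"
  shows False
proof -
  have "q*((x2-x1)*(y3-y1) - (y2-y1)*(x3-x1)) = 0" using k2 k3 by algebra
  hence cr: "(x2-x1)*(y3-y1) - (y2-y1)*(x3-x1) = 0" using q by simp
  define a where "a = (x2-x1)^2+(y2-y1)^2"
  define s where "s = (x2-x1)*(x3-x1)+(y2-y1)*(y3-y1)"
  have cx: "a*(x3-x1) = s*(x2-x1)" using cr unfolding a_def s_def by algebra
  have cy: "a*(y3-y1) = s*(y2-y1)" using cr unfolding a_def s_def by algebra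
  have "a*s*(s-a) = 0" using n2 n3 cx cy unfolding a_def s_def by algebra
  moreover have "a \<noteq> 0"
  proof
    assume "a = 0"
    hence "x2-x1 = 0 \<and> y2-y1 = 0" unfolding a_def using sum_power2_eq_zero_iff by blast
    thus False using d12 by simp
  qed
  moreover have "s \<noteq> 0"
  proof
    assume "s = 0"
    hence "x3-x1 = 0 \<and> y3-y1 = 0" using cx cy \<open>a \<noteq> 0\<close> by simp
    thus False using d13 by simp
  qed
  moreover have "s \<noteq> a"
  proof
    assume "s = a"
    hence "a*(x3-x2) = 0" "a*(y3-y2) = 0" using cx cy by (simp_all add: algebra_simps)
    thus False using d23 \<open>a \<noteq> 0\<close> by simp
  qed
  ultimately show False by simp
qed

lemma conv:
  fixes q p c1 c2 c3 x y :: int and m :: real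
  assumes q: "q > 0" and m: "m = of_int p / of_int q"
    and E: "(of_int c1 * real_of_int x - of_int c2)\<^sup>2 + (of_int c1 * real_of_int y - m * of_int c2)\<^sup>2 = real_of_int c3"
  shows "(q*c1*x - q*c2)^2 + (q*c1*y - p*c2)^2 = q^2*c3"
proof -
  have qm: "of_int q * m = of_int p" using q m by simp
  have "real_of_int ((q*c1*x - q*c2)^2 + (q*c1*y - p*c2)^2)
     = (of_int q)^2 * ((of_int c1 * real_of_int x - of_int c2)\<^sup>2 + (of_int c1 * real_of_int y - m * of_int c2)\<^sup>2)"
    by (simp add: qm[symmetric] power2_eq_square algebra_simps)
  also have "\<dots> = real_of_int (q^2*c3)" using E by simp
  finally show ?thesis by (simp only: of_int_eq_iff)
qed

lemma fin:
  fixes H m :: real and p q c1 c2 c3 x1 y1 x2 y2 :: int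
  assumes H: "H \<ge> 1" and q: "q>0" and m: "m = of_int p / of_int q" and c1: "c1\<noteq>0"
   and cop: "coprime c1 c2"
   and E1: "(q*c1*x1 - q*c2)^2 + (q*c1*y1 - p*c2)^2 = q^2*c3"
   and E2: "(q*c1*x2 - q*c2)^2 + (q*c1*y2 - p*c2)^2 = q^2*c3"
   and k: "q*(x1-x2) + p*(y1-y2) \<noteq> 0"
   and b1: "\<bar>real_of_int x1\<bar> \<le> H" and b2: "\<bar>real_of_int x2\<bar> \<le> H"
   and b3: "\<bar>real_of_int y1\<bar> \<le> H" and b4: "\<bar>real_of_int y2\<bar> \<le> H"
  shows "real_of_int \<bar>c1\<bar> \<le> 4 * of_int q * (1 + \<bar>m\<bar>) * H
       \<and> real_of_int \<bar>c2\<bar> \<le> 2 * of_int q * H\<^sup>2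
       \<and> real_of_int c3 \<le> 36 * (of_int q)\<^sup>2 * (1 + \<bar>m\<bar>)\<^sup>2 * H ^ 4"
proof -
  note A = pair_bound[OF q c1 cop E1 E2 k]
  have qm: "of_int p = of_int q * m" using q m by simp
  have q0: "0 < real_of_int q" using q by simp
  define X1 where "X1 = real_of_int x1"
  define X2 where "X2 = real_of_int x2"
  define Y1 where "Y1 = real_of_int y1"
  define Y2 where "Y2 = real_of_int y2"
  have B: "\<bar>X1\<bar> \<le> H" "\<bar>X2\<bar> \<le> H" "\<bar>Y1\<bar> \<le> H" "\<bar>Y2\<bar> \<le> H"
    using b1 b2 b3 b4 unfolding X1_def X2_def Y1_def Y2_def by auto
  have H0: "0 \<le> H" using H by simp
  have "real_of_int \<bar>q*(x1-x2)+p*(y1-y2)\<bar> = \<bar>of_int q * ((X1-X2) + m*(Y1-Y2))\<bar>"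
    unfolding X1_def X2_def Y1_def Y2_def by (simp add: qm algebra_simps)
  also have "\<dots> = of_int q * \<bar>(X1-X2) + m*(Y1-Y2)\<bar>" using q0 by (simp add: abs_mult)
  also have "\<dots> \<le> of_int q * (2*H + \<bar>m\<bar>*(2*H))"
  proof (intro mult_left_mono)
    have "\<bar>m*(Y1-Y2)\<bar> = \<bar>m\<bar>*\<bar>Y1-Y2\<bar>" by (simp add: abs_mult)
    also have "\<dots> \<le> \<bar>m\<bar>*(2*H)" using B by (intro mult_left_mono) auto
    finally show "\<bar>(X1-X2) + m*(Y1-Y2)\<bar> \<le> 2*H + \<bar>m\<bar>*(2*H)" using B by linarith
  qed (use q0 in auto)
  finally have "real_of_int \<bar>q*(x1-x2)+p*(y1-y2)\<bar> \<le> of_int q * (2*H + \<bar>m\<bar>*(2*H))" .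
  moreover have "real_of_int \<bar>c1\<bar> \<le> 2 * real_of_int \<bar>q*(x1-x2)+p*(y1-y2)\<bar>"
    using A(1) by linarith
  ultimately have G1: "real_of_int \<bar>c1\<bar> \<le> 4 * of_int q * (1 + \<bar>m\<bar>) * H"
    by (simp add: algebra_simps)
  have sq: "b^2 \<le> H^2" if "\<bar>b\<bar> \<le> H" for b :: real
  proof -
    have "\<bar>b\<bar> \<le> \<bar>H\<bar>" using that H0 by simp
    thus ?thesis using abs_le_square_iff by blast
  qed
  have "\<bar>X1^2+Y1^2-X2^2-Y2^2\<bar> \<le> 2*H^2"
    using sq[OF B(1)] sq[OF B(2)] sq[OF B(3)] sq[OF B(4)] 
    by (smt (verit) zero_le_power2)
  hence Z: "of_int q * \<bar>X1^2+Y1^2-X2^2-Y2^2\<bar> \<le> of_int q * (2*H^2)"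
    using q0 by (intro mult_left_mono) auto
  have "real_of_int \<bar>c2\<bar> \<le> real_of_int (q*\<bar>x1^2+y1^2-x2^2-y2^2\<bar>)"
    using A(2) by (simp only: of_int_le_iff)
  also have "\<dots> = of_int q * \<bar>X1^2+Y1^2-X2^2-Y2^2\<bar>"
    unfolding X1_def X2_def Y1_def Y2_def by simp
  finally have "real_of_int \<bar>c2\<bar> \<le> of_int q * (2*H^2)" using Z by linarith
  hence G2: "real_of_int \<bar>c2\<bar> \<le> 2 * of_int q * H\<^sup>2" by simp
  have "real_of_int c3 \<le> real_of_int (((x1-x2)^2+(y1-y2)^2)*((q*(y1+y2)-p*(x1+x2))^2 + (q*(x1-x2)+p*(y1-y2))^2))"
    using A(3) by (simp only: of_int_le_iff)
  also have "\<dots> = (of_int q)^2 * (((X1-X2)^2+(Y1-Y2)^2)*(((Y1+Y2) - m*(X1+X2))^2 + ((X1-X2) + m*(Y1-Y2))^2))"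
  proof -
    have "real_of_int (((x1-x2)^2+(y1-y2)^2)*((q*(y1+y2)-p*(x1+x2))^2 + (q*(x1-x2)+p*(y1-y2))^2))
      = ((X1-X2)^2+(Y1-Y2)^2)*((of_int q*(Y1+Y2)-of_int p*(X1+X2))^2 + (of_int q*(X1-X2)+of_int p*(Y1-Y2))^2)"
      unfolding X1_def X2_def Y1_def Y2_def by simp
    also have "\<dots> = (of_int q)^2 * (((X1-X2)^2+(Y1-Y2)^2)*(((Y1+Y2) - m*(X1+X2))^2 + ((X1-X2) + m*(Y1-Y2))^2))"
      unfolding qm by algebra
    finally show ?thesis .
  qed
  also have "\<dots> \<le> (of_int q)^2 * (36*(1+\<bar>m\<bar>)^2*H^4)"
    using L2[OF B(1,2,3,4), of m] by (intro mult_left_mono) auto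
  finally have G3: "real_of_int c3 \<le> 36 * (of_int q)\<^sup>2 * (1 + \<bar>m\<bar>)\<^sup>2 * H ^ 4" by simp
  show ?thesis using G1 G2 G3 by blast
qed

theorem proposition1:
  fixes H :: real and p q c1 c2 c3 :: int and m :: real
  assumes "H \<ge> 1"
    and "q > 0"
    and "m = of_int p / of_int q"
    and "c1 \<noteq> 0" and "c3 \<ge> 0"
    and "coprime_pair c1 c2"
    and "card {(x, y). \<bar>real_of_int x\<bar> \<le> H \<and> \<bar>real_of_int y\<bar> \<le> H \<and>
              (of_int c1 * real_of_int x - of_int c2)\<^sup>2 + (of_int c1 * real_of_int y - m * of_int c2)\<^sup>2
                = real_of_int c3} \<ge> 3"
  shows "real_of_int \<bar>c1\<bar> \<le> 4 * of_int q * (1 + \<bar>m\<bar>) * H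
       \<and> real_of_int \<bar>c2\<bar> \<le> 2 * of_int q * H\<^sup>2
       \<and> real_of_int c3 \<le> 36 * (of_int q)\<^sup>2 * (1 + \<bar>m\<bar>)\<^sup>2 * H ^ 4"
proof -
  define S where "S = {(x, y). \<bar>real_of_int x\<bar> \<le> H \<and> \<bar>real_of_int y\<bar> \<le> H \<and>
              (of_int c1 * real_of_int x - of_int c2)\<^sup>2 + (of_int c1 * real_of_int y - m * of_int c2)\<^sup>2
                = real_of_int c3}"
  have c: "3 \<le> card S" using assms(7) unfolding S_def .
  obtain T where T: "T \<subseteq> S" "card T = 3" using obtain_subset_with_card_n[OF c] by blast
  then obtain P1 P2 P3 where P: "T = {P1,P2,P3}" "P1 \<noteq> P2" "P2 \<noteq> P3" "P1 \<noteq> P3"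
    using card_3_iff by metis
  obtain x1 y1 where p1: "P1 = (x1,y1)" by fastforce
  obtain x2 y2 where p2: "P2 = (x2,y2)" by fastforce
  obtain x3 y3 where p3: "P3 = (x3,y3)" by fastforce
  have M: "(x1,y1) \<in> S" "(x2,y2) \<in> S" "(x3,y3) \<in> S" using T P p1 p2 p3 by auto
  have cop: "coprime c1 c2" using assms(6) assms(4) unfolding coprime_pair_def by auto
  have E1: "(q*c1*x1 - q*c2)^2 + (q*c1*y1 - p*c2)^2 = q^2*c3"
    using M(1) conv[OF assms(2,3)] unfolding S_def by auto
  have E2: "(q*c1*x2 - q*c2)^2 + (q*c1*y2 - p*c2)^2 = q^2*c3"
    using M(2) conv[OF assms(2,3)] unfolding S_def by auto
  have E3: "(q*c1*x3 - q*c2)^2 + (q*c1*y3 - p*c2)^2 = q^2*c3"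
    using M(3) conv[OF assms(2,3)] unfolding S_def by auto
  have B1: "\<bar>real_of_int x1\<bar> \<le> H" "\<bar>real_of_int y1\<bar> \<le> H" using M(1) unfolding S_def by auto
  have B2: "\<bar>real_of_int x2\<bar> \<le> H" "\<bar>real_of_int y2\<bar> \<le> H" using M(2) unfolding S_def by auto
  have B3: "\<bar>real_of_int x3\<bar> \<le> H" "\<bar>real_of_int y3\<bar> \<le> H" using M(3) unfolding S_def by auto
  show ?thesis
  proof (cases "q*(x1-x2) + p*(y1-y2) \<noteq> 0")
    case True
    show ?thesis using fin[OF assms(1,2,3,4) cop E1 E2 True B1(1) B2(1) B1(2) B2(2)] .
  next
    case F2: False
    show ?thesis
    proof (cases "q*(x1-x3) + p*(y1-y3) \<noteq> 0")
      case True
      show ?thesis using fin[OF assms(1,2,3,4) cop E1 E3 True B1(1) B3(1) B1(2) B3(2)] .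
    next
      case F3: False
      have "q*c1*(x1^2+y1^2-x2^2-y2^2) = 0" using rel[OF assms(2,4) E1 E2] F2 by simp
      hence n2: "x2^2+y2^2 = x1^2+y1^2" using assms(2,4) by simp
      have "q*c1*(x1^2+y1^2-x3^2-y3^2) = 0" using rel[OF assms(2,4) E1 E3] F3 by simp
      hence n3: "x3^2+y3^2 = x1^2+y1^2" using assms(2,4) by simp
      have k2: "q*(x2-x1)+p*(y2-y1) = 0" using F2 by (simp add: algebra_simps)
      have k3: "q*(x3-x1)+p*(y3-y1) = 0" using F3 by (simp add: algebra_simps)
      have "q \<noteq> 0" using assms(2) by simp
      from three_pts[OF this k2 k3 n2 n3] P p1 p2 p3 show ?thesis by auto
    qed
  qed
qed

end
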